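(* Assume the hypotheses of Theorem 3 (see context), and assume moreover that for every $k\in\mathbb{N}$ there exists $j_k\ge k$ with $(\hat y,u_{j_k})\neq0$. Let $k_n$ and $\delta_n'$ be as in the modified discrepancy principle. Then $$\mathbb{P}\left(\sqrt{\sum_{j=\max(k_n,1)}^{m_n}d_{j,n}^2(\bar Y_n-\hat y,u_j)^2}\le\frac{\delta_n'}{2}\right)\to1\quad(n\to\infty).$$
   Context: Setting: $K:\mathcal{X}\to\mathcal{Y}$ compact linear between infinite-dimensional real separable Hilbert spaces, dense range, singular value decomposition $(\sigma_j,u_j,v_j)$ with $\sigma_j>0$ nonincreasing to $0$, $Kv_j=\sigma_ju_j$. Hypotheses of Theorem 3: $\hat y=K\hat x$, $Y_1,Y_2,\dots$ i.i.d. $\mathcal{Y}$-valued with $\mathbb{E}Y_1=\hat y$; $q>p-1>0$, $\sigma_j^2\asymp j^{-q}$, $0<v_j:=\mathbb{E}(Y_1-\hat y,u_j)^2\le C_pj^{-p}$, $\mathbb{E}(Y_1-\hat y,u_j)^4\le Cv_j^2$; $0<\varepsilon_1<1$, $0<\varepsilon_2<\min(1,p-1)$; $\hat x\in\{\sum_j\sigma_j^\nu(\xi,v_j)v_j:\|\xi\|\le\rho\}$ with $\nu,\rho>0$. Modified discrepancy principle: $\bar Y_n:=\frac1n\sum_{i\le n}Y_i$, $m_n:=\lfloor n^{1-\varepsilon_1}\rfloor$, $s_{j,n}^2:=\frac1{n-1}\sum_{i=1}^n(Y_i-\bar Y_n,u_j)^2$, $S_n:=\sum_{j'=1}^{m_n}s_{j',n}^2$,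 $d_{1,n}:=\sqrt{\min(S_n/s_{1,n}^2,1/\sigma_1^2)}$, $d_{j,n}:=\sqrt{\min(j^{-(1+\varepsilon_2)}S_n/s_{j,n}^2,\ \sigma_{j-1}^2d_{j-1,n}^2/\sigma_j^2)}$ for $2\le j\le m_n$, $\delta_n':=\sqrt{\frac1n\sum_{j=1}^{m_n}d_{j,n}^2s_{j,n}^2}$, and $k_n:=\min\{k\in\{0,\dots,m_n\}:\sqrt{\sum_{j=k+1}^{m_n}d_{j,n}^2(\bar Y_n,u_j)^2}\le\delta_n'\}$. *)

theory Defs
  imports "HOL-Probability.Probability"
begin

definition compact_op :: "('a::real_normed_vector \<Rightarrow> 'b::real_normed_vector) \<Rightarrow> bool" where
  "compact_op K \<longleftrightarrow> linear K \<and> (\<forall>B. bounded B \<longrightarrow> compact (closure (K ` B)))"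

definition orthonormal_seq :: "(nat \<Rightarrow> 'a::real_inner) \<Rightarrow> bool" where
  "orthonormal_seq e \<longleftrightarrow> (\<forall>i\<ge>1. \<forall>j\<ge>1. inner (e i) (e j) = (if i = j then 1 else 0))"

text \<open>Modified discrepancy principle. The argument ys is the sample Y_1, Y_2, ... (index 0 unused);
  u are the left singular vectors, sv the singular values (both indexed from 1).\<close>

definition mdp_Ybar :: "(nat \<Rightarrow> 'a::real_vector) \<Rightarrow> nat \<Rightarrow> 'a" where
  "mdp_Ybar ys n = (1 / real n) *\<^sub>R (\<Sum>i=1..n. ys i)"

definition mdp_m :: "real \<Rightarrow> nat \<Rightarrow> nat" where
  "mdp_m eps1 n = nat \<lfloor>real n powr (1 - eps1)\<rfloor>"

definition mdp_s2 :: "(nat \<Rightarrow> 'a::real_inner) \<Rightarrow> (nat \<Rightarrow> 'a) \<Rightarrow> nat \<Rightarrow> nat \<Rightarrow> real" where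
  "mdp_s2 u ys n j = (1 / (real n - 1)) * (\<Sum>i=1..n. (inner (ys i - mdp_Ybar ys n) (u j))\<^sup>2)"

definition mdp_S :: "real \<Rightarrow> (nat \<Rightarrow> 'a::real_inner) \<Rightarrow> (nat \<Rightarrow> 'a) \<Rightarrow> nat \<Rightarrow> real" where
  "mdp_S eps1 u ys n = (\<Sum>j'=1..mdp_m eps1 n. mdp_s2 u ys n j')"

text \<open>min(a/b, c) with the convention a/0 = +infinity (so the minimum is then c).\<close>
definition min_div :: "real \<Rightarrow> real \<Rightarrow> real \<Rightarrow> real" where
  "min_div a b c = (if b = 0 then c else min (a / b) c)"

text \<open>mdp_d ... n j = d_{j,n}, defined recursively for j \<ge> 1 (value at j = 0 unused).\<close>
fun mdp_d :: "real \<Rightarrow> real \<Rightarrow> (nat \<Rightarrow> real) \<Rightarrow> (nat \<Rightarrow> 'a::real_inner) \<Rightarrow> (nat \<Rightarrow> 'a) \<Rightarrow> nat \<Rightarrow> nat \<Rightarrow> real" where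
  "mdp_d eps1 eps2 sv u ys n 0 = 0"
| "mdp_d eps1 eps2 sv u ys n (Suc j) =
     (if j = 0 then
        sqrt (min_div (mdp_S eps1 u ys n) (mdp_s2 u ys n 1) (1 / (sv 1)\<^sup>2))
      else
        sqrt (min_div (real (Suc j) powr (-(1 + eps2)) * mdp_S eps1 u ys n) (mdp_s2 u ys n (Suc j))
                ((sv j)\<^sup>2 * (mdp_d eps1 eps2 sv u ys n j)\<^sup>2 / (sv (Suc j))\<^sup>2)))"

definition mdp_delta' :: "real \<Rightarrow> real \<Rightarrow> (nat \<Rightarrow> real) \<Rightarrow> (nat \<Rightarrow> 'a::real_inner) \<Rightarrow> (nat \<Rightarrow> 'a) \<Rightarrow> nat \<Rightarrow> real" where
  "mdp_delta' eps1 eps2 sv u ys n =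
     sqrt ((1 / real n) * (\<Sum>j=1..mdp_m eps1 n. (mdp_d eps1 eps2 sv u ys n j)\<^sup>2 * mdp_s2 u ys n j))"

definition mdp_k :: "real \<Rightarrow> real \<Rightarrow> (nat \<Rightarrow> real) \<Rightarrow> (nat \<Rightarrow> 'a::real_inner) \<Rightarrow> (nat \<Rightarrow> 'a) \<Rightarrow> nat \<Rightarrow> nat" where
  "mdp_k eps1 eps2 sv u ys n =
     (LEAST k. k \<le> mdp_m eps1 n \<and>
        sqrt (\<Sum>j=k+1..mdp_m eps1 n. (mdp_d eps1 eps2 sv u ys n j)\<^sup>2 * (inner (mdp_Ybar ys n) (u j))\<^sup>2)
          \<le> mdp_delta' eps1 eps2 sv u ys n)"

end

theory Submission
  imports Defs
begin


lemma (in prob_space) indep_vars_pair: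
  assumes ind: "indep_vars (\<lambda>_. borel) Z I" and "i \<in> I" "k \<in> I" "i \<noteq> k"
  shows "indep_var borel (Z i) borel (Z k)"
proof -
  have "indep_var borel ((\<lambda>f. f i) \<circ> (\<lambda>\<omega>. restrict (\<lambda>i. Z i \<omega>) {i}))
      borel ((\<lambda>f. f k) \<circ> (\<lambda>\<omega>. restrict (\<lambda>i. Z i \<omega>) {k}))"
    using assms by (intro indep_var_compose[OF indep_var_restrict[OF ind]]) auto
  also have "((\<lambda>f. f i) \<circ> (\<lambda>\<omega>. restrict (\<lambda>i. Z i \<omega>) {i})) = Z i" by auto
  also have "((\<lambda>f. f k) \<circ> (\<lambda>\<omega>. restrict (\<lambda>i. Z i \<omega>) {k})) = Z k" by auto
  finally show ?thesis .
qed

lemma (in prob_space) sum_sq_indep: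
  fixes Z :: "nat \<Rightarrow> 'a \<Rightarrow> real"
  assumes ind: "indep_vars (\<lambda>_. borel) Z I" and F: "finite F" "F \<subseteq> I"
    and sq: "\<And>i. i \<in> F \<Longrightarrow> integrable M (\<lambda>w. (Z i w)\<^sup>2)"
    and mz: "\<And>i. i \<in> F \<Longrightarrow> (\<integral>w. Z i w \<partial>M) = 0"
  shows "integrable M (\<lambda>w. (\<Sum>i\<in>F. Z i w)\<^sup>2) \<and> (\<integral>w. (\<Sum>i\<in>F. Z i w)\<^sup>2 \<partial>M) = (\<Sum>i\<in>F. \<integral>w. (Z i w)\<^sup>2 \<partial>M)"
proof -
  have meas: "\<And>i. i \<in> F \<Longrightarrow> Z i \<in> borel_measurable M"
    using ind F unfolding indep_vars_def by auto
  have int1: "\<And>i. i \<in> F \<Longrightarrow> integrable M (Z i)"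
    using sq meas by (blast intro: square_integrable_imp_integrable)
  have eq: "(\<lambda>w. (\<Sum>i\<in>F. Z i w)\<^sup>2) = (\<lambda>w. \<Sum>i\<in>F. \<Sum>k\<in>F. Z i w * Z k w)"
    by (simp add: power2_eq_square sum_product)
  have cross: "integrable M (\<lambda>w. Z i w * Z k w) \<and> (\<integral>w. Z i w * Z k w \<partial>M) = (if i = k then \<integral>w. (Z i w)\<^sup>2 \<partial>M else 0)"
    if "i \<in> F" "k \<in> F" for i k
  proof (cases "i = k")
    case True then show ?thesis using sq[OF that(1)] by (simp add: power2_eq_square)
  next
    case False
    have iv: "indep_var borel (Z i) borel (Z k)"
      using indep_vars_pair[OF ind] F that False by auto
    show ?thesis using indep_var_lebesgue_integral[OF iv int1 int1] indep_var_integrable[OF iv int1 int1]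
      mz that False by simp
  qed
  have "integrable M (\<lambda>w. \<Sum>i\<in>F. \<Sum>k\<in>F. Z i w * Z k w)"
    using cross by (intro Bochner_Integration.integrable_sum) auto
  moreover have "(\<integral>w. (\<Sum>i\<in>F. \<Sum>k\<in>F. Z i w * Z k w) \<partial>M) = (\<Sum>i\<in>F. \<integral>w. (Z i w)\<^sup>2 \<partial>M)"
  proof -
    have "(\<integral>w. (\<Sum>i\<in>F. \<Sum>k\<in>F. Z i w * Z k w) \<partial>M) = (\<Sum>i\<in>F. \<Sum>k\<in>F. \<integral>w. Z i w * Z k w \<partial>M)"
      using cross by (simp add: Bochner_Integration.integrable_sum)
    also have "\<dots> = (\<Sum>i\<in>F. \<Sum>k\<in>F. (if i = k then \<integral>w. (Z i w)\<^sup>2 \<partial>M else 0))"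
      using cross by (intro sum.cong refl) auto
    also have "\<dots> = (\<Sum>i\<in>F. \<integral>w. (Z i w)\<^sup>2 \<partial>M)"
      using F by (simp add: sum.delta)
    finally show ?thesis .
  qed
  ultimately show ?thesis unfolding eq by simp
qed




locale mdp_setting = prob_space M for M :: "'w measure" +
  fixes Y :: "nat \<Rightarrow> 'w \<Rightarrow> 'y::{real_inner,banach,second_countable_topology}" and u :: "nat \<Rightarrow> 'y"
    and yhat :: 'y and C :: real
  assumes Y_rv: "\<And>i. i \<ge> 1 \<Longrightarrow> Y i \<in> borel_measurable M"
  and Y_indep: "indep_vars (\<lambda>_. borel) Y {1..}"
  and Y_ident: "\<And>i. i\<ge>1 \<Longrightarrow> distr M borel (Y i) = distr M borel (Y 1)"
  and Y_int: "integrable M (Y 1)"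
  and Y_mean: "integral\<^sup>L M (Y 1) = yhat"
  and fourth_int: "\<And>j. j\<ge>1 \<Longrightarrow> integrable M (\<lambda>w. (inner (Y 1 w - yhat) (u j)) ^ 4)"
  and fourth_bound: "\<And>j. j\<ge>1 \<Longrightarrow> (\<integral>w. (inner (Y 1 w - yhat) (u j)) ^ 4 \<partial>M)
                         \<le> C * (\<integral>w. (inner (Y 1 w - yhat) (u j))\<^sup>2 \<partial>M)\<^sup>2"
begin

definition X :: "nat \<Rightarrow> nat \<Rightarrow> 'w \<Rightarrow> real" where
  "X j i w = inner (Y i w - yhat) (u j)"

definition v :: "nat \<Rightarrow> real" where
  "v j = (\<integral>w. (X j 1 w)\<^sup>2 \<partial>M)"

definition Xbar :: "nat \<Rightarrow> nat \<Rightarrow> 'w \<Rightarrow> real" where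
  "Xbar j n w = (1 / real n) * (\<Sum>i=1..n. X j i w)"

definition A :: "nat \<Rightarrow> nat \<Rightarrow> 'w \<Rightarrow> real" where
  "A j n w = (1 / real n) * (\<Sum>i=1..n. (X j i w)\<^sup>2)"

lemma X_meas[measurable]: "i \<ge> 1 \<Longrightarrow> X j i \<in> borel_measurable M"
  unfolding X_def[abs_def] using Y_rv by measurable

lemma Xbar_meas[measurable]: "Xbar j n \<in> borel_measurable M"
  unfolding Xbar_def[abs_def] by measurable

lemma A_meas[measurable]: "A j n \<in> borel_measurable M"
  unfolding A_def[abs_def] by measurable

lemma ident:
  fixes h :: "'y \<Rightarrow> real"
  assumes h: "h \<in> borel_measurable borel" and i: "i \<ge> 1"
  shows "integrable M (\<lambda>w. h (Y i w)) = integrable M (\<lambda>w. h (Y 1 w))"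
    and "(\<integral>w. h (Y i w) \<partial>M) = (\<integral>w. h (Y 1 w) \<partial>M)"
proof -
  have m1: "Y 1 \<in> borel_measurable M" using Y_rv by simp
  have mi: "Y i \<in> borel_measurable M" using Y_rv i by simp
  show "integrable M (\<lambda>w. h (Y i w)) = integrable M (\<lambda>w. h (Y 1 w))"
    using integrable_distr_eq[OF mi h] integrable_distr_eq[OF m1 h] Y_ident[OF i] by simp
  show "(\<integral>w. h (Y i w) \<partial>M) = (\<integral>w. h (Y 1 w) \<partial>M)"
    using integral_distr[OF mi h] integral_distr[OF m1 h] Y_ident[OF i] by simp
qed

lemma X_moments:
  assumes j: "j \<ge> 1" and i: "i \<ge> 1"
  shows "integrable M (\<lambda>w. (X j i w)^4)" "integrable M (\<lambda>w. (X j i w)\<^sup>2)"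
    "integrable M (X j i)" "(\<integral>w. X j i w \<partial>M) = 0" "(\<integral>w. (X j i w)\<^sup>2 \<partial>M) = v j"
    "(\<integral>w. (X j i w)^4 \<partial>M) \<le> C * (v j)\<^sup>2"
proof -
  have hm: "(\<lambda>y. (inner (y - yhat) (u j)) ^ k) \<in> borel_measurable borel" for k :: nat
    by measurable
  have hm1: "(\<lambda>y. inner (y - yhat) (u j)) \<in> borel_measurable borel"
    by measurable
  note id4 = ident[OF hm[of 4] i] and id2 = ident[OF hm[of 2] i] and id1 = ident[OF hm1 i]
  have i14: "integrable M (\<lambda>w. (X j 1 w)^4)" using fourth_int[OF j] by (simp add: X_def)
  have i11: "integrable M (X j 1)"
  proof -
    have "integrable M (\<lambda>w. inner (Y 1 w) (u j) - inner yhat (u j))"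
      using Y_int by (intro Bochner_Integration.integrable_diff) auto
    then show ?thesis by (simp add: X_def[abs_def] inner_diff_left)
  qed
  have i12: "integrable M (\<lambda>w. (X j 1 w)\<^sup>2)"
  proof (rule Bochner_Integration.integrable_bound[of _ "\<lambda>w. 1 + (X j 1 w)^4"])
    show "integrable M (\<lambda>w. 1 + (X j 1 w)^4)" using i14 by simp
    show "(\<lambda>w. (X j 1 w)\<^sup>2) \<in> borel_measurable M" by measurable
    show "AE x in M. norm ((X j 1 x)\<^sup>2) \<le> norm (1 + (X j 1 x) ^ 4)"
    proof (intro AE_I2)
      fix x
      have t: "t \<le> 1 + t\<^sup>2" for t :: real
      proof (cases "t \<le> 1")
        case True then show ?thesis by (smt (verit) zero_le_power2)
      next
        case False then have "t * 1 \<le> t * t" by (intro mult_left_mono) auto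
        then show ?thesis by (simp add: power2_eq_square)
      qed
      have "(X j 1 x)\<^sup>2 \<le> 1 + ((X j 1 x)\<^sup>2)\<^sup>2" by (rule t)
      then show "norm ((X j 1 x)\<^sup>2) \<le> norm (1 + (X j 1 x) ^ 4)"
        by (simp add: power_mult[symmetric])
    qed
  qed
  have e11: "(\<integral>w. X j 1 w \<partial>M) = 0"
  proof -
    have "(\<integral>w. X j 1 w \<partial>M) = (\<integral>w. inner (Y 1 w) (u j) - inner yhat (u j) \<partial>M)"
      by (simp add: X_def inner_diff_left)
    also have "\<dots> = (\<integral>w. inner (Y 1 w) (u j) \<partial>M) - inner yhat (u j)"
      using Y_int by (subst Bochner_Integration.integral_diff) (auto simp: prob_space)
    also have "\<dots> = 0" using Y_int Y_mean by simp
    finally show ?thesis .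
  qed
  show "integrable M (\<lambda>w. (X j i w)^4)" using id4(1) i14 by (simp add: X_def)
  show "integrable M (\<lambda>w. (X j i w)\<^sup>2)" using id2(1) i12 by (simp add: X_def)
  show "integrable M (X j i)" using id1(1) i11 by (simp add: X_def[abs_def])
  show "(\<integral>w. X j i w \<partial>M) = 0" using id1(2) e11 by (simp add: X_def)
  show "(\<integral>w. (X j i w)\<^sup>2 \<partial>M) = v j" using id2(2) by (simp add: X_def v_def)
  show "(\<integral>w. (X j i w)^4 \<partial>M) \<le> C * (v j)\<^sup>2" using id4(2) fourth_bound[OF j] by (simp add: X_def v_def)
qed

lemma X_indep: "indep_vars (\<lambda>_. borel) (X j) {1..}"
proof -
  have "indep_vars (\<lambda>_. borel) (\<lambda>i w. (\<lambda>y. inner (y - yhat) (u j)) (Y i w)) {1..}"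
    by (rule indep_vars_compose2[OF Y_indep]) measurable
  then show ?thesis by (simp add: X_def[abs_def])
qed

lemma v_nonneg: "v j \<ge> 0" unfolding v_def by simp

lemma Xbar_moment:
  assumes j: "j \<ge> 1" and n: "n \<ge> 1"
  shows "integrable M (\<lambda>w. (Xbar j n w)\<^sup>2)" "(\<integral>w. (Xbar j n w)\<^sup>2 \<partial>M) = v j / n"
proof -
  have S: "integrable M (\<lambda>w. (\<Sum>i\<in>{1..n}. X j i w)\<^sup>2) \<and>
      (\<integral>w. (\<Sum>i\<in>{1..n}. X j i w)\<^sup>2 \<partial>M) = (\<Sum>i\<in>{1..n}. \<integral>w. (X j i w)\<^sup>2 \<partial>M)"
    by (rule sum_sq_indep[OF X_indep]) (auto simp: X_moments[OF j])
  have eq: "(\<lambda>w. (Xbar j n w)\<^sup>2) = (\<lambda>w. (1/real n)^2 * (\<Sum>i\<in>{1..n}. X j i w)\<^sup>2)"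
    by (simp add: Xbar_def power_divide fun_eq_iff)
  show "integrable M (\<lambda>w. (Xbar j n w)\<^sup>2)" unfolding eq using S by simp
  have "(\<Sum>i\<in>{1..n}. \<integral>w. (X j i w)\<^sup>2 \<partial>M) = n * v j"
    by (simp add: X_moments[OF j])
  then show "(\<integral>w. (Xbar j n w)\<^sup>2 \<partial>M) = v j / n" unfolding eq using S n
    by (simp add: power2_eq_square field_simps)
qed

lemma A_moment:
  assumes j: "j \<ge> 1" and n: "n \<ge> 1"
  shows "integrable M (\<lambda>w. (A j n w - v j)\<^sup>2)" "(\<integral>w. (A j n w - v j)\<^sup>2 \<partial>M) \<le> C * (v j)\<^sup>2 / n"
proof -
  define Z where "Z i w = (X j i w)\<^sup>2 - v j" for i w
  have Zind: "indep_vars (\<lambda>_. borel) Z {1..}"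
  proof -
    have "indep_vars (\<lambda>_. borel) (\<lambda>i w. (\<lambda>x. x\<^sup>2 - v j) (X j i w)) {1..}"
      by (rule indep_vars_compose2[OF X_indep]) measurable
    then show ?thesis by (simp add: Z_def[abs_def])
  qed
  have Zsq: "integrable M (\<lambda>w. (Z i w)\<^sup>2) \<and> (\<integral>w. (Z i w)\<^sup>2 \<partial>M) \<le> C * (v j)\<^sup>2" if i: "i \<ge> 1" for i
  proof -
    have eqz: "(\<lambda>w. (Z i w)\<^sup>2) = (\<lambda>w. (X j i w)^4 - 2 * v j * (X j i w)\<^sup>2 + (v j)\<^sup>2)"
      by (simp add: Z_def fun_eq_iff power2_diff power_mult[symmetric])
    have int: "integrable M (\<lambda>w. (X j i w)^4 - 2 * v j * (X j i w)\<^sup>2 + (v j)\<^sup>2)"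
      using X_moments[OF j i] by (intro Bochner_Integration.integrable_add Bochner_Integration.integrable_diff) auto
    have "(\<integral>w. (X j i w)^4 - 2 * v j * (X j i w)\<^sup>2 + (v j)\<^sup>2 \<partial>M)
        = (\<integral>w. (X j i w)^4 \<partial>M) - 2 * v j * v j + (v j)\<^sup>2"
      using X_moments[OF j i] by (simp add: prob_space)
    also have "\<dots> \<le> C * (v j)\<^sup>2" using X_moments(6)[OF j i] by (simp add: power2_eq_square) (smt (verit) zero_le_square)
    finally show ?thesis unfolding eqz using int by simp
  qed
  have Zm: "(\<integral>w. Z i w \<partial>M) = 0" if i: "i \<ge> 1" for i
    using X_moments[OF j i] by (simp add: Z_def prob_space)
  have S: "integrable M (\<lambda>w. (\<Sum>i\<in>{1..n}. Z i w)\<^sup>2) \<and>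
      (\<integral>w. (\<Sum>i\<in>{1..n}. Z i w)\<^sup>2 \<partial>M) = (\<Sum>i\<in>{1..n}. \<integral>w. (Z i w)\<^sup>2 \<partial>M)"
    by (rule sum_sq_indep[OF Zind]) (auto simp: Zsq Zm)
  have eq: "(\<lambda>w. (A j n w - v j)\<^sup>2) = (\<lambda>w. (1/real n)^2 * (\<Sum>i\<in>{1..n}. Z i w)\<^sup>2)"
  proof
    fix w
    have "A j n w - v j = (1/real n) * (\<Sum>i\<in>{1..n}. Z i w)"
      using n by (simp add: A_def Z_def sum_subtractf field_simps)
    then show "(A j n w - v j)\<^sup>2 = (1/real n)^2 * (\<Sum>i\<in>{1..n}. Z i w)\<^sup>2"
      by (simp add: power_divide)
  qed
  show "integrable M (\<lambda>w. (A j n w - v j)\<^sup>2)" unfolding eq using S by simp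
  have "(\<Sum>i\<in>{1..n}. \<integral>w. (Z i w)\<^sup>2 \<partial>M) \<le> (\<Sum>i\<in>{1..n}. C * (v j)\<^sup>2)"
    using Zsq by (intro sum_mono) auto
  also have "\<dots> = n * (C * (v j)\<^sup>2)" by simp
  finally have le: "(\<Sum>i\<in>{1..n}. \<integral>w. (Z i w)\<^sup>2 \<partial>M) \<le> n * (C * (v j)\<^sup>2)" .
  have "(\<integral>w. (A j n w - v j)\<^sup>2 \<partial>M) = (1/real n)^2 * (\<Sum>i\<in>{1..n}. \<integral>w. (Z i w)\<^sup>2 \<partial>M)"
    unfolding eq using S by simp
  also have "\<dots> \<le> (1/real n)^2 * (n * (C * (v j)\<^sup>2))"
    by (intro mult_left_mono le) simp
  also have "\<dots> = C * (v j)\<^sup>2 / n" using n by (simp add: power2_eq_square field_simps)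
  finally show "(\<integral>w. (A j n w - v j)\<^sup>2 \<partial>M) \<le> C * (v j)\<^sup>2 / n" .
qed

end



lemma min_div_nonneg: "a \<ge> 0 \<Longrightarrow> b \<ge> 0 \<Longrightarrow> c \<ge> 0 \<Longrightarrow> min_div a b c \<ge> 0"
  by (simp add: min_div_def)

lemma s2_nonneg: "n \<ge> 2 \<Longrightarrow> mdp_s2 u ys n j \<ge> 0"
  unfolding mdp_s2_def by (intro mult_nonneg_nonneg sum_nonneg) auto

lemma S_nonneg: "n \<ge> 2 \<Longrightarrow> mdp_S e1 u ys n \<ge> 0"
  unfolding mdp_S_def by (intro sum_nonneg s2_nonneg)

lemma d_sq:
  assumes n: "n \<ge> 2"
  shows "(mdp_d e1 e2 sv u ys n (Suc j))\<^sup>2 =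
     (if j = 0 then min_div (mdp_S e1 u ys n) (mdp_s2 u ys n 1) (1 / (sv 1)\<^sup>2)
      else min_div (real (Suc j) powr (-(1 + e2)) * mdp_S e1 u ys n) (mdp_s2 u ys n (Suc j))
                ((sv j)\<^sup>2 * (mdp_d e1 e2 sv u ys n j)\<^sup>2 / (sv (Suc j))\<^sup>2))"
proof -
  have S0: "mdp_S e1 u ys n \<ge> 0" by (rule S_nonneg[OF n])
  have s0: "\<And>i. mdp_s2 u ys n i \<ge> 0" by (rule s2_nonneg[OF n])
  have p: "\<And>j'::nat. real j' powr (-(1 + e2)) * mdp_S e1 u ys n \<ge> 0" using S0 by simp
  show ?thesis
  proof (cases "j = 0")
    case True
    have "min_div (mdp_S e1 u ys n) (mdp_s2 u ys n 1) (1 / (sv 1)\<^sup>2) \<ge> 0"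
      by (intro min_div_nonneg S0 s0) simp
    then show ?thesis using True by simp
  next
    case False
    have "min_div (real (Suc j) powr (-(1 + e2)) * mdp_S e1 u ys n) (mdp_s2 u ys n (Suc j))
                ((sv j)\<^sup>2 * (mdp_d e1 e2 sv u ys n j)\<^sup>2 / (sv (Suc j))\<^sup>2) \<ge> 0"
      by (intro min_div_nonneg p s0) simp
    then show ?thesis using False by simp
  qed
qed

lemma d_upper:
  assumes n: "n \<ge> 2" and j: "j \<ge> 1" and s: "mdp_s2 u ys n j > 0"
  shows "(mdp_d e1 e2 sv u ys n j)\<^sup>2 \<le> real j powr (-(1 + e2)) * mdp_S e1 u ys n / mdp_s2 u ys n j"
proof -
  obtain j' where jj: "j = Suc j'" using j by (cases j) auto
  show ?thesis
    using s unfolding jj d_sq[OF n] by (auto simp: min_div_def)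
qed

lemma d_upper2:
  assumes n: "n \<ge> 2" and j: "j \<ge> 1"
  shows "(mdp_d e1 e2 sv u ys n j)\<^sup>2 * mdp_s2 u ys n j \<le> real j powr (-(1 + e2)) * mdp_S e1 u ys n"
proof (cases "mdp_s2 u ys n j > 0")
  case True
  then show ?thesis using d_upper[OF n j True] by (simp add: pos_le_divide_eq)
next
  case False
  then have "mdp_s2 u ys n j = 0" using s2_nonneg[OF n, of u ys j] by linarith
  then show ?thesis using S_nonneg[OF n, of e1 u ys] by (simp add: zero_le_mult_iff)
qed

lemma d_lower:
  assumes n: "n \<ge> 2" and j: "j \<ge> 1" and c: "c \<ge> 0"
    and s: "\<And>i. 1 \<le> i \<Longrightarrow> i \<le> j \<Longrightarrow> mdp_s2 u ys n i > 0 \<and> mdp_S e1 u ys n / mdp_s2 u ys n i \<ge> c"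
    and svp: "\<And>i. 1 \<le> i \<Longrightarrow> sv i > 0" and svm: "\<And>i. 1 \<le> i \<Longrightarrow> sv (Suc i) \<le> sv i"
    and e2: "e2 > 0"
  shows "(mdp_d e1 e2 sv u ys n j)\<^sup>2 \<ge> min (real j powr (-(1 + e2)) * c) (1 / (sv 1)\<^sup>2)"
  using j s
proof (induction j)
  case 0 then show ?case by simp
next
  case (Suc j)
  show ?case
  proof (cases "j = 0")
    case True
    then show ?thesis using Suc.prems(2)[of 1] unfolding d_sq[OF n]
      by (auto simp: min_div_def)
  next
    case False
    have IH: "(mdp_d e1 e2 sv u ys n j)\<^sup>2 \<ge> min (real j powr (-(1 + e2)) * c) (1 / (sv 1)\<^sup>2)"
      using False Suc.prems by (intro Suc.IH) auto
    have sp: "mdp_s2 u ys n (Suc j) > 0" and sc: "mdp_S e1 u ys n / mdp_s2 u ys n (Suc j) \<ge> c"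
      using Suc.prems(2)[of "Suc j"] by auto
    have rat: "(sv j)\<^sup>2 / (sv (Suc j))\<^sup>2 \<ge> 1"
    proof -
      have "sv (Suc j) > 0" "sv (Suc j) \<le> sv j" using svp svm False by auto
      then have "(sv (Suc j))\<^sup>2 \<le> (sv j)\<^sup>2" by (intro power_mono) auto
      then show ?thesis using \<open>sv (Suc j) > 0\<close> by simp
    qed
    have t2: "(sv j)\<^sup>2 * (mdp_d e1 e2 sv u ys n j)\<^sup>2 / (sv (Suc j))\<^sup>2 \<ge> (mdp_d e1 e2 sv u ys n j)\<^sup>2"
    proof -
      have "(mdp_d e1 e2 sv u ys n j)\<^sup>2 * 1 \<le> (mdp_d e1 e2 sv u ys n j)\<^sup>2 * ((sv j)\<^sup>2 / (sv (Suc j))\<^sup>2)"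
        by (intro mult_left_mono rat) auto
      then show ?thesis by (simp add: field_simps)
    qed
    have t1: "real (Suc j) powr (-(1 + e2)) * mdp_S e1 u ys n / mdp_s2 u ys n (Suc j) \<ge> real (Suc j) powr (-(1 + e2)) * c"
      using mult_left_mono[OF sc, of "real (Suc j) powr (-(1 + e2))"] by simp
    have mono: "real (Suc j) powr (-(1 + e2)) \<le> real j powr (-(1 + e2))"
      using False e2 by (intro powr_mono2') auto
    have "real (Suc j) powr (-(1 + e2)) * c \<le> real j powr (-(1 + e2)) * c"
      using mono c by (intro mult_right_mono) auto
    then show ?thesis unfolding d_sq[OF n] using False sp t1 t2 IH
      by (auto simp: min_div_def)
  qed
qed

lemma Ybar_inner:
  assumes n: "n \<ge> 1"
  shows "inner (mdp_Ybar ys n - yhat) (u j) = (1 / real n) * (\<Sum>i=1..n. inner (ys i - yhat) (u j))"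
proof -
  have "inner (mdp_Ybar ys n - yhat) (u j) = (1 / real n) * (\<Sum>i=1..n. inner (ys i) (u j)) - inner yhat (u j)"
    by (simp add: mdp_Ybar_def inner_diff_left inner_sum_left)
  also have "\<dots> = (1 / real n) * (\<Sum>i=1..n. inner (ys i - yhat) (u j))"
    using n by (simp add: inner_diff_left sum_subtractf field_simps)
  finally show ?thesis .
qed

lemma s2_formula:
  assumes n: "n \<ge> 2"
  shows "mdp_s2 u ys n j = real n / (real n - 1) *
     ((1 / real n) * (\<Sum>i=1..n. (inner (ys i - yhat) (u j))\<^sup>2) - (inner (mdp_Ybar ys n - yhat) (u j))\<^sup>2)"
proof -
  define xb where "xb = inner (mdp_Ybar ys n - yhat) (u j)"
  define xc where "xc i = inner (ys i - yhat) (u j)" for i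
  have sxc: "(\<Sum>i=1..n. xc i) = n * xb"
    using Ybar_inner[of n ys yhat u j] n by (simp add: xb_def xc_def)
  have e: "inner (ys i - mdp_Ybar ys n) (u j) = xc i - xb" for i
    by (simp add: xc_def xb_def inner_diff_left)
  have "(\<Sum>i=1..n. (inner (ys i - mdp_Ybar ys n) (u j))\<^sup>2) = (\<Sum>i=1..n. (xc i)\<^sup>2 - 2 * xb * xc i + xb\<^sup>2)"
    unfolding e by (simp add: power2_diff algebra_simps)
  also have "\<dots> = (\<Sum>i=1..n. (xc i)\<^sup>2) - 2 * xb * (\<Sum>i=1..n. xc i) + n * xb\<^sup>2"
    by (simp add: sum.distrib sum_subtractf sum_distrib_left)
  also have "\<dots> = (\<Sum>i=1..n. (xc i)\<^sup>2) - n * xb\<^sup>2"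
    unfolding sxc by (simp add: power2_eq_square)
  finally have "(\<Sum>i=1..n. (inner (ys i - mdp_Ybar ys n) (u j))\<^sup>2) = (\<Sum>i=1..n. (xc i)\<^sup>2) - n * xb\<^sup>2" .
  then have "mdp_s2 u ys n j = ((\<Sum>i=1..n. (xc i)\<^sup>2) - n * xb\<^sup>2) / (real n - 1)"
    unfolding mdp_s2_def by simp
  moreover have "real n - 1 > 0" "real n > 0" using n by auto
  moreover have "real n / (real n - 1) * ((1 / real n) * (\<Sum>i=1..n. (xc i)\<^sup>2) - xb\<^sup>2)
      = ((\<Sum>i=1..n. (xc i)\<^sup>2) - n * xb\<^sup>2) / (real n - 1)"
  proof -
    have "real n - 1 \<noteq> 0" "real n \<noteq> 0" using \<open>real n > 0\<close> \<open>real n - 1 > 0\<close> by auto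
    then show ?thesis by (simp add: field_simps)
  qed
  ultimately show ?thesis
    by (simp add: xb_def[symmetric] xc_def[symmetric])
qed

lemma delta_sq:
  assumes n: "n \<ge> 2"
  shows "(mdp_delta' e1 e2 sv u ys n)\<^sup>2 = (1 / real n) * (\<Sum>j=1..mdp_m e1 n. (mdp_d e1 e2 sv u ys n j)\<^sup>2 * mdp_s2 u ys n j)"
  unfolding mdp_delta'_def using s2_nonneg[OF n, of u ys]
  by (subst real_sqrt_pow2) (auto intro!: sum_nonneg mult_nonneg_nonneg divide_nonneg_nonneg)




locale mdp_full = mdp_setting M Y u yhat C for M :: "'w measure" and Y :: "nat \<Rightarrow> 'w \<Rightarrow> 'y::{real_inner,banach,second_countable_topology}"
  and u yhat C +
  fixes sv :: "nat \<Rightarrow> real" and p C_p eps1 eps2 :: real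
  assumes sv_pos: "\<And>j. j\<ge>1 \<Longrightarrow> sv j > 0"
  and sv_mono: "\<And>j. j\<ge>1 \<Longrightarrow> sv (Suc j) \<le> sv j"
  and var_pos: "\<And>j. j\<ge>1 \<Longrightarrow> v j > 0"
  and var_bound: "\<And>j. j\<ge>1 \<Longrightarrow> v j \<le> C_p * real j powr (-p)"
  and p1: "p > 1" and eps1: "0 < eps1" "eps1 < 1" and eps2: "0 < eps2"
  and nonvanish: "\<forall>k. \<exists>j\<ge>k. j \<ge> 1 \<and> inner yhat (u j) \<noteq> 0"
begin

abbreviation "kk n w \<equiv> mdp_k eps1 eps2 sv u (\<lambda>i. Y i w) n"
abbreviation "dd n w j \<equiv> mdp_d eps1 eps2 sv u (\<lambda>i. Y i w) n j"
abbreviation "del n w \<equiv> mdp_delta' eps1 eps2 sv u (\<lambda>i. Y i w) n"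
abbreviation "SS n w \<equiv> mdp_S eps1 u (\<lambda>i. Y i w) n"
abbreviation "s2 n w j \<equiv> mdp_s2 u (\<lambda>i. Y i w) n j"

definition "target n w \<longleftrightarrow> sqrt (\<Sum>j = max (kk n w) 1 .. mdp_m eps1 n.
                    (dd n w j)\<^sup>2 * (inner (mdp_Ybar (\<lambda>i. Y i w) n - yhat) (u j))\<^sup>2) \<le> del n w / 2"

lemma Cp_pos: "C_p > 0"
  using var_pos[of 1] var_bound[of 1] by simp

lemma v_le_Cp: "j \<ge> 1 \<Longrightarrow> v j \<le> C_p"
proof -
  assume j: "j \<ge> 1"
  have "real j powr (-p) \<le> 1" using j p1 by (simp add: powr_minus_divide ge_one_powr_ge_zero)
  then have "C_p * real j powr (-p) \<le> C_p * 1" using Cp_pos by (intro mult_left_mono) auto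
  then show ?thesis using var_bound[OF j] by simp
qed

lemma xbar_eq: "n \<ge> 1 \<Longrightarrow> inner (mdp_Ybar (\<lambda>i. Y i w) n - yhat) (u j) = Xbar j n w"
  using Ybar_inner[where n=n and ys="\<lambda>i. Y i w" and yhat=yhat and u=u and j=j] by (simp add: Xbar_def X_def)

lemma s2_eq: "n \<ge> 2 \<Longrightarrow> s2 n w j = real n / (real n - 1) * (A j n w - (Xbar j n w)\<^sup>2)"
  using s2_formula[where n=n and ys="\<lambda>i. Y i w" and yhat=yhat and u=u and j=j] xbar_eq[of n w j] by (simp add: A_def X_def)

lemma good_implies:
  fixes n K J :: nat and Vt Zt eta :: real and w
  defines "m \<equiv> mdp_m eps1 n"
  defines "a \<equiv> inner yhat (u J)"
  defines "c0 \<equiv> min (v 1 / 2) (v 1 / (2 * (sv 1)\<^sup>2))"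
  defines "cJ \<equiv> min (real J powr (-(1 + eps2)) * (v 1 / (5 * C_p))) (1 / (sv 1)\<^sup>2)"
  assumes n2: "n \<ge> 2" and KJ: "1 \<le> K" "K \<le> J" "J \<le> m" and a: "a \<noteq> 0"
    and Vt: "(\<Sum>j=1..m. v j) \<le> Vt" and Zt: "(\<Sum>j=1..m. real j powr (-(1 + eps2))) \<le> Zt"
    and eta: "eta = c0 / (10 * Vt)"
    and nbig: "real n > (5/2) * Vt * Zt * 4 / (cJ * a\<^sup>2)"
    and E1: "\<forall>j\<in>{1..m}. \<bar>A j n w - v j\<bar> < v j / 4"
    and E2: "\<forall>j\<in>{1..m}. \<bar>Xbar j n w\<bar> < sqrt (v j / 8)"
    and E3: "\<bar>Xbar J n w\<bar> < \<bar>a\<bar> / 2"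
    and E4: "(\<Sum>j=K..m. real j powr (-(1 + eps2)) * (2 / v j) * (Xbar j n w)\<^sup>2) < eta / n"
  shows "target n w"
proof -
  have n1: "n \<ge> 1" and npos: "real n > 0" using n2 by auto
  have m1: "m \<ge> 1" using KJ by simp
  have vp: "\<And>j. j \<ge> 1 \<Longrightarrow> v j > 0" by (rule var_pos)
  have xb2: "(Xbar j n w)\<^sup>2 < v j / 8" if "j \<in> {1..m}" for j
  proof -
    have "\<bar>Xbar j n w\<bar>\<^sup>2 < (sqrt (v j / 8))\<^sup>2"
      using E2 that by (intro power_strict_mono) auto
    then show ?thesis using vp[of j] that by simp
  qed
  have nr: "1 \<le> real n / (real n - 1)" "real n / (real n - 1) \<le> 2" using n2 by (auto simp: field_simps)
  have s2lo: "s2 n w j \<ge> v j / 2" and s2hi: "s2 n w j \<le> 5/2 * v j" if j: "j \<in> {1..m}" for j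
  proof -
    have e1: "\<bar>A j n w - v j\<bar> < v j / 4" using E1 j by blast
    have q1: "A j n w - (Xbar j n w)\<^sup>2 \<ge> 5/8 * v j" using e1 xb2[OF j] by linarith
    have q2: "A j n w - (Xbar j n w)\<^sup>2 \<le> 5/4 * v j" using e1 zero_le_power2[of "Xbar j n w"] by linarith
    have vj: "v j > 0" using vp j by auto
    have "s2 n w j \<ge> 1 * (5/8 * v j)" unfolding s2_eq[OF n2]
      using q1 nr vj by (intro mult_mono) auto
    then show "s2 n w j \<ge> v j / 2" using vj by simp
    have "s2 n w j \<le> 2 * (5/4 * v j)" unfolding s2_eq[OF n2]
      using q2 q1 nr vj by (intro mult_mono) auto
    then show "s2 n w j \<le> 5/2 * v j" by simp
  qed
  have s2pos: "s2 n w j > 0" if "j \<in> {1..m}" for j using s2lo[OF that] vp[of j] that by auto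
  have S_def': "SS n w = (\<Sum>j=1..m. s2 n w j)" by (simp add: mdp_S_def m_def)
  have Slo: "SS n w \<ge> v 1 / 2"
  proof -
    have "s2 n w 1 \<le> (\<Sum>j=1..m. s2 n w j)"
      using m1 s2_nonneg[OF n2, of u "\<lambda>i. Y i w"] by (intro member_le_sum mult_nonneg_nonneg) auto
    then show ?thesis using s2lo[of 1] m1 S_def' by auto
  qed
  have Shi: "SS n w \<le> 5/2 * Vt"
  proof -
    have "(\<Sum>j=1..m. s2 n w j) \<le> (\<Sum>j=1..m. 5/2 * v j)" using s2hi by (intro sum_mono) auto
    also have "\<dots> = 5/2 * (\<Sum>j=1..m. v j)" by (simp add: sum_distrib_left)
    also have "\<dots> \<le> 5/2 * Vt" using Vt by simp
    finally show ?thesis using S_def' by simp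
  qed
  have v1: "v 1 > 0" using vp by simp
  have Vtpos: "Vt > 0"
  proof -
    have "v 1 \<le> (\<Sum>j=1..m. v j)" using m1 v_nonneg by (intro member_le_sum) auto
    then show ?thesis using Vt v1 by simp
  qed
  have dJ: "(dd n w J)\<^sup>2 \<ge> cJ" unfolding cJ_def
  proof (rule d_lower[OF n2])
    show "1 \<le> J" using KJ by simp
    show "0 \<le> v 1 / (5 * C_p)" using v1 Cp_pos by simp
    show "\<And>i. 1 \<le> i \<Longrightarrow> sv i > 0" by (rule sv_pos)
    show "\<And>i. 1 \<le> i \<Longrightarrow> sv (Suc i) \<le> sv i" by (rule sv_mono)
    show "0 < eps2" by (rule eps2)
    fix i assume i: "1 \<le> i" "i \<le> J"
    then have im: "i \<in> {1..m}" using KJ by auto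
    show "0 < s2 n w i \<and> v 1 / (5 * C_p) \<le> SS n w / s2 n w i"
    proof
      show "0 < s2 n w i" by (rule s2pos[OF im])
      have "v 1 / (5 * C_p) \<le> (v 1 / 2) / (5/2 * v i)"
        using v_le_Cp[of i] i vp[of i] v1 Cp_pos by (simp add: field_simps mult_left_mono)
      also have "\<dots> \<le> SS n w / (5/2 * v i)"
        using Slo vp[of i] i by (intro divide_right_mono) auto
      also have "\<dots> \<le> SS n w / s2 n w i"
        using s2hi[OF im] s2pos[OF im] Slo v1 by (intro divide_left_mono) auto
      finally show "v 1 / (5 * C_p) \<le> SS n w / s2 n w i" .
    qed
  qed
  have cJpos: "cJ > 0" unfolding cJ_def using v1 Cp_pos sv_pos[of 1] KJ by auto
  have YJ: "(inner (mdp_Ybar (\<lambda>i. Y i w) n) (u J))\<^sup>2 \<ge> a\<^sup>2 / 4"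
  proof -
    have "inner (mdp_Ybar (\<lambda>i. Y i w) n) (u J) = Xbar J n w + a"
      using xbar_eq[OF n1, of w J] by (simp add: a_def inner_diff_left)
    moreover have "\<bar>Xbar J n w + a\<bar> \<ge> \<bar>a\<bar> / 2" using E3 by linarith
    ultimately have "\<bar>a\<bar> / 2 \<le> \<bar>inner (mdp_Ybar (\<lambda>i. Y i w) n) (u J)\<bar>" by simp
    then have "(\<bar>a\<bar> / 2)\<^sup>2 \<le> \<bar>inner (mdp_Ybar (\<lambda>i. Y i w) n) (u J)\<bar>\<^sup>2"
      by (intro power_mono) auto
    then show ?thesis by (simp add: power_divide)
  qed
  have dsum_hi: "(\<Sum>j=1..m. (dd n w j)\<^sup>2 * s2 n w j) \<le> SS n w * Zt"
  proof -
    have "(\<Sum>j=1..m. (dd n w j)\<^sup>2 * s2 n w j) \<le> (\<Sum>j=1..m. real j powr (-(1 + eps2)) * SS n w)"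
      by (intro sum_mono d_upper2[OF n2]) auto
    also have "\<dots> = SS n w * (\<Sum>j=1..m. real j powr (-(1 + eps2)))"
      by (simp add: sum_distrib_left mult.commute)
    also have "\<dots> \<le> SS n w * Zt" using Zt S_nonneg[OF n2, of eps1 u "\<lambda>i. Y i w"] by (intro mult_left_mono) auto
    finally show ?thesis .
  qed
  have del_hi: "(del n w)\<^sup>2 \<le> 5/2 * Vt * Zt / n"
  proof -
    have Zt0: "Zt \<ge> 0" using Zt m1 by (smt (verit) sum_nonneg powr_ge_zero)
    have "(del n w)\<^sup>2 \<le> (1 / real n) * (SS n w * Zt)"
      unfolding delta_sq[OF n2] m_def[symmetric] using dsum_hi npos by (intro mult_left_mono) auto
    also have "\<dots> \<le> (1 / real n) * (5/2 * Vt * Zt)"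
      using Shi Zt0 npos by (intro mult_left_mono mult_right_mono) auto
    finally show ?thesis by simp
  qed
  have d1: "(dd n w 1)\<^sup>2 * s2 n w 1 = min (SS n w) (s2 n w 1 / (sv 1)\<^sup>2)"
  proof -
    have sp: "s2 n w 1 > 0" using s2pos m1 by auto
    have "(dd n w 1)\<^sup>2 = min (SS n w / s2 n w 1) (1 / (sv 1)\<^sup>2)"
      using d_sq[OF n2, of eps1 eps2 sv u "\<lambda>i. Y i w" 0] sp by (simp add: min_div_def)
    then show ?thesis using sp by (simp add: min_mult_distrib_right)
  qed
  have del_lo: "(del n w)\<^sup>2 \<ge> c0 / n"
  proof -
    have "(dd n w 1)\<^sup>2 * s2 n w 1 \<le> (\<Sum>j=1..m. (dd n w j)\<^sup>2 * s2 n w j)"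
      using m1 s2_nonneg[OF n2, of u "\<lambda>i. Y i w"] by (intro member_le_sum mult_nonneg_nonneg) auto
    moreover have "c0 \<le> (dd n w 1)\<^sup>2 * s2 n w 1"
    proof -
      have "v 1 / (2 * (sv 1)\<^sup>2) \<le> s2 n w 1 / (sv 1)\<^sup>2"
        using s2lo[of 1] m1 sv_pos[of 1] by (simp add: field_simps)
      then show ?thesis unfolding d1 c0_def using Slo by linarith
    qed
    ultimately have "c0 \<le> (\<Sum>j=1..m. (dd n w j)\<^sup>2 * s2 n w j)" by linarith
    then show ?thesis unfolding delta_sq[OF n2] m_def[symmetric] using npos
      by (simp add: divide_right_mono)
  qed
  have del0: "del n w \<ge> 0" unfolding mdp_delta'_def
    using s2_nonneg[OF n2, of u "\<lambda>i. Y i w"]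
    by (intro real_sqrt_ge_zero mult_nonneg_nonneg sum_nonneg) auto
  let ?P = "\<lambda>k. k \<le> m \<and> sqrt (\<Sum>j=k+1..m. (dd n w j)\<^sup>2 * (inner (mdp_Ybar (\<lambda>i. Y i w) n) (u j))\<^sup>2) \<le> del n w"
  have kdef: "kk n w = (LEAST k. ?P k)" unfolding mdp_k_def m_def by simp
  have Pm: "?P m" using del0 by simp
  have notP: "\<not> ?P k" if k: "k < K" for k
  proof
    assume Pk: "?P k"
    have "(dd n w J)\<^sup>2 * (inner (mdp_Ybar (\<lambda>i. Y i w) n) (u J))\<^sup>2
        \<le> (\<Sum>j=k+1..m. (dd n w j)\<^sup>2 * (inner (mdp_Ybar (\<lambda>i. Y i w) n) (u j))\<^sup>2)"
      using k KJ by (intro member_le_sum) auto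
    moreover have "cJ * (a\<^sup>2 / 4) \<le> (dd n w J)\<^sup>2 * (inner (mdp_Ybar (\<lambda>i. Y i w) n) (u J))\<^sup>2"
      using dJ YJ cJpos by (intro mult_mono) auto
    moreover have "5/2 * Vt * Zt / n < cJ * (a\<^sup>2 / 4)"
    proof -
      have a2: "a\<^sup>2 > 0" using a by simp
      have "(5/2) * Vt * Zt * 4 < real n * (cJ * a\<^sup>2)"
        using nbig cJpos a2 by (simp add: pos_divide_less_eq mult.commute)
      then show ?thesis using npos by (simp add: field_simps)
    qed
    ultimately have "(del n w)\<^sup>2 < (\<Sum>j=k+1..m. (dd n w j)\<^sup>2 * (inner (mdp_Ybar (\<lambda>i. Y i w) n) (u j))\<^sup>2)"
      using del_hi by linarith
    then have "sqrt ((del n w)\<^sup>2) < sqrt (\<Sum>j=k+1..m. (dd n w j)\<^sup>2 * (inner (mdp_Ybar (\<lambda>i. Y i w) n) (u j))\<^sup>2)"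
      by (rule real_sqrt_less_mono)
    then show False using Pk del0 by simp
  qed
  have kK: "kk n w \<ge> K"
  proof (rule ccontr)
    assume "\<not> K \<le> kk n w"
    then have "kk n w < K" by simp
    moreover have "?P (kk n w)" unfolding kdef by (rule LeastI[of ?P m, OF Pm])
    ultimately show False using notP by blast
  qed
  have sub: "{max (kk n w) 1..m} \<subseteq> {K..m}" using kK KJ by auto
  have tsum: "(\<Sum>j = max (kk n w) 1 .. m. (dd n w j)\<^sup>2 * (inner (mdp_Ybar (\<lambda>i. Y i w) n - yhat) (u j))\<^sup>2)
      \<le> (\<Sum>j = K .. m. (dd n w j)\<^sup>2 * (Xbar j n w)\<^sup>2)"
    using sum_mono2[OF _ sub, of "\<lambda>j. (dd n w j)\<^sup>2 * (Xbar j n w)\<^sup>2"] xbar_eq[OF n1] by simp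
  also have "\<dots> \<le> (\<Sum>j = K .. m. SS n w * (real j powr (-(1 + eps2)) * (2 / v j) * (Xbar j n w)\<^sup>2))"
  proof (intro sum_mono)
    fix j assume j: "j \<in> {K..m}"
    then have jm: "j \<in> {1..m}" using KJ by auto
    have "(dd n w j)\<^sup>2 \<le> real j powr (-(1 + eps2)) * SS n w / s2 n w j"
      using d_upper[OF n2 _ s2pos[OF jm]] jm by auto
    also have "\<dots> \<le> real j powr (-(1 + eps2)) * SS n w / (v j / 2)"
      using s2lo[OF jm] vp[of j] jm S_nonneg[OF n2, of eps1 u "\<lambda>i. Y i w"]
      by (intro divide_left_mono mult_nonneg_nonneg) auto
    also have "\<dots> = SS n w * (real j powr (-(1 + eps2)) * (2 / v j))" by simp
    finally show "(dd n w j)\<^sup>2 * (Xbar j n w)\<^sup>2 \<le> SS n w * (real j powr (-(1 + eps2)) * (2 / v j) * (Xbar j n w)\<^sup>2)"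
      by (metis mult.assoc mult_right_mono zero_le_power2)
  qed
  also have "\<dots> = SS n w * (\<Sum>j=K..m. real j powr (-(1 + eps2)) * (2 / v j) * (Xbar j n w)\<^sup>2)"
    by (simp add: sum_distrib_left)
  also have "\<dots> \<le> 5/2 * Vt * (eta / n)"
    using Shi E4 S_nonneg[OF n2, of eps1 u "\<lambda>i. Y i w"] Vtpos v_nonneg
    by (intro mult_mono) (auto intro!: sum_nonneg mult_nonneg_nonneg divide_nonneg_nonneg simp: less_imp_le)
  also have "\<dots> = c0 / n / 4" using Vtpos by (simp add: eta field_simps)
  also have "\<dots> \<le> (del n w)\<^sup>2 / 4" using del_lo by simp
  finally have "sqrt (\<Sum>j = max (kk n w) 1 .. m. (dd n w j)\<^sup>2 * (inner (mdp_Ybar (\<lambda>i. Y i w) n - yhat) (u j))\<^sup>2)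
      \<le> sqrt ((del n w / 2)\<^sup>2)" by (simp add: power_divide)
  then show ?thesis unfolding target_def m_def[symmetric] using del0 by simp
qed

end



context mdp_full begin

definition "T K n w = (\<Sum>j=K..mdp_m eps1 n. real j powr (-(1 + eps2)) * (2 / v j) * (Xbar j n w)\<^sup>2)"

lemma T_meas[measurable]: "T K n \<in> borel_measurable M"
  unfolding T_def[abs_def] by measurable

definition "Gset K J eta n = {w\<in>space M.
   (\<forall>j\<in>{1..mdp_m eps1 n}. \<bar>A j n w - v j\<bar> < v j / 4) \<and>
   (\<forall>j\<in>{1..mdp_m eps1 n}. \<bar>Xbar j n w\<bar> < sqrt (v j / 8)) \<and>
   \<bar>Xbar J n w\<bar> < \<bar>inner yhat (u J)\<bar> / 2 \<and> T K n w < eta / n}"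

lemma Gset_sets: "Gset K J eta n \<in> sets M"
  unfolding Gset_def by measurable

lemma prob_bad:
  fixes n K J :: nat and eta a :: real
  defines "m \<equiv> mdp_m eps1 n"
  defines "a \<equiv> inner yhat (u J)"
  assumes n2: "n \<ge> 2" and K: "K \<ge> 1" and J: "J \<ge> 1" and a: "a \<noteq> 0" and eta: "eta > 0"
  shows "measure M (space M - Gset K J eta n) \<le>
     real m * (16 * C / n) + real m * (8 / n) + 4 * v J / (n * a\<^sup>2)
     + (2 / eta) * (\<Sum>j=K..m. real j powr (-(1 + eps2)))"
proof -
  have n1: "n \<ge> 1" and npos: "real n > 0" using n2 by auto
  define B1 where "B1 j = {w\<in>space M. \<bar>A j n w - v j\<bar> \<ge> v j / 4}" for j
  define B2 where "B2 j = {w\<in>space M. \<bar>Xbar j n w\<bar> \<ge> sqrt (v j / 8)}" for j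
  define B3 where "B3 = {w\<in>space M. \<bar>Xbar J n w\<bar> \<ge> \<bar>a\<bar> / 2}"
  define B4 where "B4 = {w\<in>space M. T K n w \<ge> eta / n}"
  have sB1[measurable]: "B1 j \<in> sets M" for j unfolding B1_def by measurable
  have sB2[measurable]: "B2 j \<in> sets M" for j unfolding B2_def by measurable
  have sB3[measurable]: "B3 \<in> sets M" unfolding B3_def by measurable
  have sB4[measurable]: "B4 \<in> sets M" unfolding B4_def by measurable
  have sub: "space M - Gset K J eta n \<subseteq> ((\<Union>j\<in>{1..m}. B1 j) \<union> (\<Union>j\<in>{1..m}. B2 j)) \<union> (B3 \<union> B4)"
    unfolding Gset_def B1_def B2_def B3_def B4_def m_def a_def by (auto simp: not_less)
  have m1: "measure M (B1 j) \<le> 16 * C / n" if j: "j \<in> {1..m}" for j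
  proof -
    have vj: "v j > 0" using var_pos j by auto
    have "measure M (B1 j) \<le> (\<integral>w. (A j n w - v j) ^ 2 \<partial>M) / (v j / 4)\<^sup>2"
      unfolding B1_def using A_moment[of j n] j n1 vj by (intro second_moment_method) auto
    also have "\<dots> \<le> (C * (v j)\<^sup>2 / n) / (v j / 4)\<^sup>2"
      using A_moment(2)[of j n] j n1 by (intro divide_right_mono) auto
    also have "\<dots> = 16 * C / n" using vj by (simp add: field_simps power2_eq_square)
    finally show ?thesis .
  qed
  have m2: "measure M (B2 j) \<le> 8 / n" if j: "j \<in> {1..m}" for j
  proof -
    have vj: "v j > 0" using var_pos j by auto
    have "measure M (B2 j) \<le> (\<integral>w. (Xbar j n w) ^ 2 \<partial>M) / (sqrt (v j / 8))\<^sup>2"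
      unfolding B2_def using Xbar_moment[of j n] j n1 vj by (intro second_moment_method) auto
    also have "\<dots> = 8 / n" using vj Xbar_moment(2)[of j n] j n1 by (simp add: field_simps)
    finally show ?thesis .
  qed
  have m3: "measure M B3 \<le> 4 * v J / (n * a\<^sup>2)"
  proof -
    have "measure M B3 \<le> (\<integral>w. (Xbar J n w) ^ 2 \<partial>M) / (\<bar>a\<bar> / 2)\<^sup>2"
      unfolding B3_def using Xbar_moment[of J n] J n1 a by (intro second_moment_method) auto
    also have "\<dots> = 4 * v J / (n * a\<^sup>2)" using Xbar_moment(2)[of J n] J n1 a
      by (simp add: field_simps power2_eq_square)
    finally show ?thesis .
  qed
  have m4: "measure M B4 \<le> (2 / eta) * (\<Sum>j=K..m. real j powr (-(1 + eps2)))"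
  proof -
    have intT: "integrable M (T K n)" unfolding T_def[abs_def]
      using Xbar_moment K n1 by (intro Bochner_Integration.integrable_sum integrable_mult_right) auto
    have ET: "(\<integral>w. T K n w \<partial>M) = (2 / n) * (\<Sum>j=K..m. real j powr (-(1 + eps2)))"
    proof -
      have "(\<integral>w. T K n w \<partial>M) = (\<Sum>j=K..m. real j powr (-(1 + eps2)) * (2 / v j) * (v j / n))"
        unfolding T_def m_def[symmetric]
      proof (subst Bochner_Integration.integral_sum)
        show "\<And>j. j \<in> {K..m} \<Longrightarrow> integrable M (\<lambda>w. real j powr (-(1 + eps2)) * (2 / v j) * (Xbar j n w)\<^sup>2)"
          using Xbar_moment K n1 by auto
        show "(\<Sum>j=K..m. \<integral>w. real j powr (-(1 + eps2)) * (2 / v j) * (Xbar j n w)\<^sup>2 \<partial>M) =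
            (\<Sum>j=K..m. real j powr (-(1 + eps2)) * (2 / v j) * (v j / n))"
          using Xbar_moment K n1 by (intro sum.cong) auto
      qed
      also have "\<dots> = (\<Sum>j=K..m. (2 / n) * real j powr (-(1 + eps2)))"
      proof (intro sum.cong refl)
        fix j assume "j \<in> {K..m}"
        then have "v j > 0" using var_pos K by auto
        then show "real j powr (-(1 + eps2)) * (2 / v j) * (v j / n) = (2 / n) * real j powr (-(1 + eps2))"
          by (simp add: field_simps)
      qed
      finally show ?thesis by (simp add: sum_distrib_left)
    qed
    have "measure M B4 \<le> (\<integral>w. T K n w \<partial>M) / (eta / n)"
    proof -
      have "\<And>w. 0 \<le> T K n w" unfolding T_def using v_nonneg by (auto intro!: sum_nonneg mult_nonneg_nonneg)
      then show ?thesis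
        unfolding B4_def using intT eta npos
        by (intro integral_Markov_inequality_measure[where A="space M"]) auto
    qed
    also have "\<dots> = (2 / eta) * (\<Sum>j=K..m. real j powr (-(1 + eps2)))"
      unfolding ET using npos eta by (simp add: field_simps)
    finally show ?thesis .
  qed
  have "measure M (space M - Gset K J eta n) \<le> measure M (((\<Union>j\<in>{1..m}. B1 j) \<union> (\<Union>j\<in>{1..m}. B2 j)) \<union> (B3 \<union> B4))"
    using sub by (intro finite_measure_mono) auto
  also have "\<dots> \<le> measure M ((\<Union>j\<in>{1..m}. B1 j) \<union> (\<Union>j\<in>{1..m}. B2 j)) + measure M (B3 \<union> B4)"
    by (intro measure_Un_le) auto
  also have "\<dots> \<le> (measure M (\<Union>j\<in>{1..m}. B1 j) + measure M (\<Union>j\<in>{1..m}. B2 j)) + (measure M B3 + measure M B4)"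
    by (intro add_mono measure_Un_le) auto
  also have "\<dots> \<le> ((\<Sum>j\<in>{1..m}. measure M (B1 j)) + (\<Sum>j\<in>{1..m}. measure M (B2 j))) + (measure M B3 + measure M B4)"
    by (intro add_mono finite_measure_subadditive_finite order_refl) auto
  also have "\<dots> \<le> ((\<Sum>j\<in>{1..m}. 16 * C / n) + (\<Sum>j\<in>{1..m}. 8 / n)) + (4 * v J / (n * a\<^sup>2) + (2 / eta) * (\<Sum>j=K..m. real j powr (-(1 + eps2))))"
    using m1 m2 m3 m4 by (intro add_mono sum_mono) auto
  finally show ?thesis by simp
qed

end



context mdp_full begin

lemma meas_Ybar[measurable]: "(\<lambda>w. mdp_Ybar (\<lambda>i. Y i w) n) \<in> borel_measurable M"
  unfolding mdp_Ybar_def using Y_rv by measurable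

lemma meas_s2[measurable]: "(\<lambda>w. mdp_s2 u (\<lambda>i. Y i w) n j) \<in> borel_measurable M"
  unfolding mdp_s2_def using Y_rv by measurable

lemma meas_S[measurable]: "(\<lambda>w. mdp_S eps1 u (\<lambda>i. Y i w) n) \<in> borel_measurable M"
  unfolding mdp_S_def by measurable

lemma meas_d[measurable]: "(\<lambda>w. mdp_d eps1 eps2 sv u (\<lambda>i. Y i w) n j) \<in> borel_measurable M"
proof (induction j)
  case 0 then show ?case by simp
next
  case (Suc j)
  show ?case unfolding mdp_d.simps min_div_def using Suc by measurable
qed

lemma meas_delta[measurable]: "(\<lambda>w. mdp_delta' eps1 eps2 sv u (\<lambda>i. Y i w) n) \<in> borel_measurable M"
  unfolding mdp_delta'_def by measurable

lemma meas_k[measurable]: "(\<lambda>w. mdp_k eps1 eps2 sv u (\<lambda>i. Y i w) n) \<in> measurable M (count_space UNIV)"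
  unfolding mdp_k_def by measurable

lemma target_sets: "{w\<in>space M. target n w} \<in> sets M"
proof -
  have eq: "target n w \<longleftrightarrow> sqrt (\<Sum>j = 1 .. mdp_m eps1 n. (if max (kk n w) 1 \<le> j then
          (dd n w j)\<^sup>2 * (inner (mdp_Ybar (\<lambda>i. Y i w) n - yhat) (u j))\<^sup>2 else 0)) \<le> del n w / 2" for w
  proof -
    have "(\<Sum>j = 1 .. mdp_m eps1 n. (if max (kk n w) 1 \<le> j then
          (dd n w j)\<^sup>2 * (inner (mdp_Ybar (\<lambda>i. Y i w) n - yhat) (u j))\<^sup>2 else 0)) =
        (\<Sum>j = max (kk n w) 1 .. mdp_m eps1 n. (dd n w j)\<^sup>2 * (inner (mdp_Ybar (\<lambda>i. Y i w) n - yhat) (u j))\<^sup>2)"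
      by (rule sum.mono_neutral_cong_right) auto
    then show ?thesis unfolding target_def by simp
  qed
  show ?thesis unfolding eq by measurable
qed

end


context mdp_full begin
lemma m_le: "n \<ge> 1 \<Longrightarrow> real (mdp_m eps1 n) / n \<le> real n powr (-eps1)"
proof -
  assume n: "n \<ge> 1"
  have "real (mdp_m eps1 n) \<le> real n powr (1 - eps1)"
    unfolding mdp_m_def by simp
  also have "\<dots> = real n * real n powr (-eps1)"
    using n by (simp add: powr_diff powr_minus divide_inverse)
  finally show ?thesis using n by (simp add: field_simps mult.commute)
qed

lemma m_ge: "real J + 1 \<le> real n powr (1 - eps1) \<Longrightarrow> J \<le> mdp_m eps1 n"
  unfolding mdp_m_def by (intro le_nat_floor) simp

theorem main: "(\<lambda>n. measure M {w\<in>space M. target n w}) \<longlonglongrightarrow> 1"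
proof (rule LIMSEQ_I)
  fix r :: real assume r: "r > 0"
  define f where "f j = real j powr (-(1 + eps2))" for j :: nat
  define g where "g j = C_p * real j powr (-p)" for j :: nat
  have sf: "summable f" unfolding f_def using eps2 by (subst summable_real_powr_iff) simp
  have sg: "summable g" unfolding g_def using p1 by (intro summable_mult) (subst summable_real_powr_iff; simp)
  have f0: "f j \<ge> 0" for j unfolding f_def by simp
  have g0: "g j \<ge> 0" for j unfolding g_def using Cp_pos by simp
  define Zt where "Zt = suminf f"
  define Vt where "Vt = suminf g"
  have Zt: "(\<Sum>j=1..m. f j) \<le> Zt" for m
    unfolding Zt_def using sf f0 by (intro sum_le_suminf) auto
  have Vt: "(\<Sum>j=1..m. v j) \<le> Vt" for m
  proof -
    have "(\<Sum>j=1..m. v j) \<le> (\<Sum>j=1..m. g j)" unfolding g_def using var_bound by (intro sum_mono) auto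
    also have "\<dots> \<le> Vt" unfolding Vt_def using sg g0 by (intro sum_le_suminf) auto
    finally show ?thesis .
  qed
  have v1: "v 1 > 0" using var_pos by simp
  have Vtpos: "Vt > 0" using Vt[of 1] v1 by simp
  define c0 where "c0 = min (v 1 / 2) (v 1 / (2 * (sv 1)\<^sup>2))"
  have c0: "c0 > 0" unfolding c0_def using v1 sv_pos[of 1] by simp
  define eta where "eta = c0 / (10 * Vt)"
  have eta0: "eta > 0" unfolding eta_def using c0 Vtpos by simp
  have "(\<lambda>K. \<Sum>j<K. f j) \<longlonglongrightarrow> Zt" unfolding Zt_def using sf by (rule summable_LIMSEQ)
  then have "\<forall>\<^sub>F K in sequentially. Zt - r * eta / 8 < (\<Sum>j<K. f j)"
    using r eta0 by (intro order_tendstoD(1)) auto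
  then obtain K0 where K0: "\<And>K. K \<ge> K0 \<Longrightarrow> Zt - r * eta / 8 < (\<Sum>j<K. f j)"
    unfolding eventually_sequentially by blast
  define K where "K = max K0 1"
  have K1: "K \<ge> 1" unfolding K_def by simp
  have tail: "(2 / eta) * (\<Sum>j=K..m. f j) < r / 2" for m
  proof -
    have "(\<Sum>j<K. f j) + (\<Sum>j=K..m. f j) = (\<Sum>j\<in>{..<K} \<union> {K..m}. f j)"
      by (subst sum.union_disjoint) auto
    also have "\<dots> \<le> Zt" unfolding Zt_def using sf f0 by (intro sum_le_suminf) auto
    finally have "(\<Sum>j=K..m. f j) < r * eta / 8" using K0[of K] unfolding K_def by simp
    then have "(2 / eta) * (\<Sum>j=K..m. f j) < (2 / eta) * (r * eta / 8)"
      using eta0 by (intro mult_strict_left_mono) auto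
    also have "\<dots> = r / 4" using eta0 by simp
    finally show ?thesis using r by simp
  qed
  obtain J where J: "J \<ge> K" "J \<ge> 1" "inner yhat (u J) \<noteq> 0" using nonvanish by blast
  define a where "a = inner yhat (u J)"
  have a: "a \<noteq> 0" using J unfolding a_def by simp
  define cJ where "cJ = min (real J powr (-(1 + eps2)) * (v 1 / (5 * C_p))) (1 / (sv 1)\<^sup>2)"
  define N0 where "N0 = (5/2) * Vt * Zt * 4 / (cJ * a\<^sup>2)"
  have ev1: "\<forall>\<^sub>F n in sequentially. n \<ge> 2" by (rule eventually_ge_at_top)
  have ev2: "\<forall>\<^sub>F n in sequentially. J \<le> mdp_m eps1 n"
  proof -
    have "((\<lambda>n. real n powr (-(1 - eps1))) \<longlongrightarrow> 0) sequentially"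
      using eps1 by (intro tendsto_neg_powr filterlim_real_sequentially) auto
    then have "\<forall>\<^sub>F n in sequentially. real n powr (-(1 - eps1)) < 1 / (real J + 1)"
      by (intro order_tendstoD(2)) auto
    moreover have "\<forall>\<^sub>F n in sequentially. n \<ge> 1" by (rule eventually_ge_at_top)
    ultimately show ?thesis
    proof eventually_elim
      case (elim n)
      have pos: "real n powr (1 - eps1) > 0" using elim by simp
      have pm: "real n powr (-(1 - eps1)) = inverse (real n powr (1 - eps1))" by (rule powr_minus)
      have "inverse (real n powr (1 - eps1)) < 1 / (real J + 1)" using elim(1) unfolding pm .
      then have "real J + 1 < real n powr (1 - eps1)" using pos
        by (simp add: field_simps)
      then show ?case by (intro m_ge) simp
    qed
  qed
  have ev3: "\<forall>\<^sub>F n in sequentially. real n > N0"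
    using filterlim_real_sequentially by (simp add: filterlim_at_top_dense)
  have ev4: "\<forall>\<^sub>F n in sequentially. (16 * \<bar>C\<bar> + 8) * real n powr (-eps1) + (4 * v J / a\<^sup>2) * (1 / real n) < r / 2"
  proof -
    have "((\<lambda>n. (16 * \<bar>C\<bar> + 8) * real n powr (-eps1) + (4 * v J / a\<^sup>2) * (1 / real n)) \<longlongrightarrow>
        (16 * \<bar>C\<bar> + 8) * 0 + (4 * v J / a\<^sup>2) * 0) sequentially"
      using eps1 by (intro tendsto_intros tendsto_neg_powr filterlim_real_sequentially) auto
    then show ?thesis using r by (intro order_tendstoD(2)) auto
  qed
  from eventually_conj[OF ev1 eventually_conj[OF ev2 eventually_conj[OF ev3 ev4]]]
  obtain N where N: "\<And>n. n \<ge> N \<Longrightarrow> n \<ge> 2 \<and> J \<le> mdp_m eps1 n \<and> real n > N0 \<and>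
      (16 * \<bar>C\<bar> + 8) * real n powr (-eps1) + (4 * v J / a\<^sup>2) * (1 / real n) < r / 2"
    unfolding eventually_sequentially by blast
  show "\<exists>no. \<forall>n\<ge>no. norm (measure M {w\<in>space M. target n w} - 1) < r"
  proof (intro exI allI impI)
    fix n assume nN: "n \<ge> N"
    note Nn = N[OF nN]
    have n2: "n \<ge> 2" and Jm: "J \<le> mdp_m eps1 n" and nbig: "real n > N0" using Nn by auto
    have npos: "real n > 0" using n2 by simp
    let ?m = "mdp_m eps1 n"
    have Gsub: "Gset K J eta n \<subseteq> {w\<in>space M. target n w}"
    proof
      fix w assume w: "w \<in> Gset K J eta n"
      have "target n w"
        using good_implies[OF n2 K1 J(1) Jm, of Vt Zt eta w] a Vt Zt nbig w
        unfolding Gset_def T_def a_def N0_def cJ_def c0_def eta_def f_def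
        by (auto simp: a_def)
      then show "w \<in> {w\<in>space M. target n w}" using w unfolding Gset_def by auto
    qed
    have bad: "measure M (space M - Gset K J eta n) < r"
    proof -
      have "measure M (space M - Gset K J eta n) \<le>
         real ?m * (16 * C / n) + real ?m * (8 / n) + 4 * v J / (n * a\<^sup>2)
         + (2 / eta) * (\<Sum>j=K..?m. f j)"
        using prob_bad[OF n2 K1 J(2) _ eta0] a unfolding a_def f_def by simp
      also have "\<dots> < r / 2 + r / 2"
      proof -
        have mn: "real ?m / n \<le> real n powr (-eps1)" using m_le n2 by simp
        have "real ?m * (16 * C / n) + real ?m * (8 / n) = (16 * C + 8) * (real ?m / n)"
          using npos by (simp add: field_simps)
        also have "\<dots> \<le> (16 * \<bar>C\<bar> + 8) * (real ?m / n)"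
          by (intro mult_right_mono) auto
        also have "\<dots> \<le> (16 * \<bar>C\<bar> + 8) * real n powr (-eps1)"
          by (intro mult_left_mono mn) auto
        finally have "real ?m * (16 * C / n) + real ?m * (8 / n) + 4 * v J / (n * a\<^sup>2)
            \<le> (16 * \<bar>C\<bar> + 8) * real n powr (-eps1) + (4 * v J / a\<^sup>2) * (1 / real n)"
          by (simp add: field_simps)
        then show ?thesis using Nn tail[of ?m] by linarith
      qed
      finally show ?thesis by simp
    qed
    have "measure M (Gset K J eta n) \<le> measure M {w\<in>space M. target n w}"
      using Gsub target_sets by (intro finite_measure_mono) auto
    moreover have "measure M (Gset K J eta n) = 1 - measure M (space M - Gset K J eta n)"
      using prob_compl[OF Gset_sets] by simp
    moreover have "measure M {w\<in>space M. target n w} \<le> 1" by (rule prob_le_1)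
    ultimately show "norm (measure M {w\<in>space M. target n w} - 1) < r"
      using bad by simp
  qed
qed

end


theorem lemma2:
  fixes K :: "'x::{real_inner, banach, second_countable_topology} \<Rightarrow> 'y::{real_inner, banach, second_countable_topology}"
    and sv :: "nat \<Rightarrow> real" and vx :: "nat \<Rightarrow> 'x" and u :: "nat \<Rightarrow> 'y"
    and M :: "'w measure" and Y :: "nat \<Rightarrow> 'w \<Rightarrow> 'y"
    and xhat :: 'x and yhat :: 'y and xi :: 'x
    and p q C_p C c1 c2 eps1 eps2 nu rho :: real
  assumes K_compact: "compact_op K"
    and K_dense: "closure (range K) = UNIV"
    and sigma_pos: "\<forall>j\<ge>1. sv j > 0"
    and sigma_mono: "\<forall>j\<ge>1. sv (Suc j) \<le> sv j"
    and sigma_lim: "sv \<longlonglongrightarrow> 0"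
    and vx_on: "orthonormal_seq vx" and u_on: "orthonormal_seq u"
    and K_v: "\<forall>j\<ge>1. K (vx j) = sv j *\<^sub>R u j"
    and K_svd: "\<forall>x. ((\<lambda>j. (sv j * inner x (vx j)) *\<^sub>R u j) has_sum K x) {1..}"
    and yhat_def: "yhat = K xhat"
    and PS: "prob_space M"
    and Y_rv: "\<forall>i\<ge>1. Y i \<in> borel_measurable M"
    and Y_indep: "prob_space.indep_vars M (\<lambda>_. borel) Y {1..}"
    and Y_ident: "\<forall>i\<ge>1. distr M borel (Y i) = distr M borel (Y 1)"
    and Y_int: "integrable M (Y 1)"
    and Y_mean: "integral\<^sup>L M (Y 1) = yhat"
    and pq: "q > p - 1" "p - 1 > 0"
    and c12: "c1 > 0" "c2 > 0"
    and sigma_rate: "\<forall>j\<ge>1. c1 * real j powr (-q) \<le> (sv j)\<^sup>2 \<and> (sv j)\<^sup>2 \<le> c2 * real j powr (-q)"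
    and fourth_int: "\<forall>j\<ge>1. integrable M (\<lambda>w. (inner (Y 1 w - yhat) (u j)) ^ 4)"
    and var_pos: "\<forall>j\<ge>1. 0 < (\<integral>w. (inner (Y 1 w - yhat) (u j))\<^sup>2 \<partial>M)"
    and var_bound: "\<forall>j\<ge>1. (\<integral>w. (inner (Y 1 w - yhat) (u j))\<^sup>2 \<partial>M) \<le> C_p * real j powr (-p)"
    and fourth_bound: "\<forall>j\<ge>1. (\<integral>w. (inner (Y 1 w - yhat) (u j)) ^ 4 \<partial>M)
                         \<le> C * (\<integral>w. (inner (Y 1 w - yhat) (u j))\<^sup>2 \<partial>M)\<^sup>2"
    and eps1: "0 < eps1" "eps1 < 1"
    and eps2: "0 < eps2" "eps2 < min 1 (p - 1)"
    and nu_rho: "nu > 0" "rho > 0"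
    and xi_norm: "norm xi \<le> rho"
    and xhat_src: "((\<lambda>j. (sv j powr nu * inner xi (vx j)) *\<^sub>R vx j) has_sum xhat) {1..}"
    and nonvanish: "\<forall>k. \<exists>j\<ge>k. j \<ge> 1 \<and> inner yhat (u j) \<noteq> 0"
  shows "(\<lambda>n. measure M {w \<in> space M.
            sqrt (\<Sum>j = max (mdp_k eps1 eps2 sv u (\<lambda>i. Y i w) n) 1 .. mdp_m eps1 n.
                    (mdp_d eps1 eps2 sv u (\<lambda>i. Y i w) n j)\<^sup>2
                    * (inner (mdp_Ybar (\<lambda>i. Y i w) n - yhat) (u j))\<^sup>2)
            \<le> mdp_delta' eps1 eps2 sv u (\<lambda>i. Y i w) n / 2})
         \<longlonglongrightarrow> 1"
  proof -
  interpret ms: mdp_setting M Y u yhat C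
  proof (intro mdp_setting.intro PS mdp_setting_axioms.intro)
    show "\<And>i. 1 \<le> i \<Longrightarrow> Y i \<in> borel_measurable M" using Y_rv by blast
    show "prob_space.indep_vars M (\<lambda>_. borel) Y {1..}" by (rule Y_indep)
    show "\<And>i. 1 \<le> i \<Longrightarrow> distr M borel (Y i) = distr M borel (Y 1)" using Y_ident by blast
    show "integrable M (Y 1)" by (rule Y_int)
    show "integral\<^sup>L M (Y 1) = yhat" by (rule Y_mean)
    show "\<And>j. 1 \<le> j \<Longrightarrow> integrable M (\<lambda>w. (inner (Y 1 w - yhat) (u j)) ^ 4)" using fourth_int by blast
    show "\<And>j. 1 \<le> j \<Longrightarrow> (\<integral>w. (inner (Y 1 w - yhat) (u j)) ^ 4 \<partial>M)
                         \<le> C * (\<integral>w. (inner (Y 1 w - yhat) (u j))\<^sup>2 \<partial>M)\<^sup>2" using fourth_bound by blast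
  qed
  interpret mdp_full M Y u yhat C sv p C_p eps1 eps2
  proof (intro mdp_full.intro ms.mdp_setting_axioms mdp_full_axioms.intro)
    show "\<And>j. 1 \<le> j \<Longrightarrow> 0 < sv j" using sigma_pos by blast
    show "\<And>j. 1 \<le> j \<Longrightarrow> sv (Suc j) \<le> sv j" using sigma_mono by blast
    show "\<And>j. 1 \<le> j \<Longrightarrow> 0 < ms.v j" using var_pos unfolding ms.v_def ms.X_def by blast
    show "\<And>j. 1 \<le> j \<Longrightarrow> ms.v j \<le> C_p * real j powr - p" using var_bound unfolding ms.v_def ms.X_def by blast
    show "1 < p" using pq by linarith
    show "0 < eps1" "eps1 < 1" using eps1 by auto
    show "0 < eps2" using eps2 by linarith
    show "\<forall>k. \<exists>j\<ge>k. j \<ge> 1 \<and> inner yhat (u j) \<noteq> 0" by (rule nonvanish)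
  qed
  have "(\<lambda>n. measure M {w\<in>space M. target n w}) \<longlonglongrightarrow> 1" by (rule main)
  then show ?thesis unfolding target_def .
qed


end
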